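(* Let $AP=\{p\}$. For $n\ge1$ let $\mathcal{T}_n$ be the Kripke tree over $AP$ consisting of an infinite main path $\pi(0)\pi(1)\cdots$ from the root, all labelled $\emptyset$, such that $\pi(n+1)$ has exactly one child (namely $\pi(n+2)$), and every $\pi(i)$ with $i\ne n+1$ has exactly two children, $\pi(i+1)$ and a node $w_i$, where the subtree rooted at $w_i$ is a single infinite path whose labels are $\{p\},\emptyset,\emptyset,\emptyset,\dots$. Then for every $n\ge1$ and every CCTL$^*$ state formula $\varphi$ over $AP$ with $|\varphi|\le n$, we have $\mathcal{T}_n\models\varphi$ if and only if $\mathcal{T}_{n+1}\models\varphi$.
   Context: A Kripke tree over $AP$ is a non-blocking tree (nonempty prefix-closed set of words over some set of directions, every node having a child) with a labelling of nodes by subsets of $AP$; an infinite path starting at $w$ is a sequence of nodes $\pi(0)=w,\pi(1),\dots$ with each $\pi(k+1)$ a child of $\pi(k)$. CCTL$^*$: state formulas $\varphi::=\top\mid p\mid\neg\varphi\mid\varphi\wedge\varphi\mid\mathsf{E}\psi\mid\mathsf{D}^k\varphi$ ($k\ge1$), path formulas $\psi::=\varphi\mid\neg\psi\mid\psi\wedge\psi\mid\mathsf{X}\psi\mid\psi\mathsf{U}\psi$. $(\mathcal{T},w)\models p$ iff $p\in\mathit{Lab}(w)$; $(\mathcal{T},w)\models\mathsf{E}\psi$ iff $(\mathcal{T},\pi,0)\models\psi$ for some infinite path $\pi$ starting at $w$; $(\mathcal{T},w)\models\mathsf{D}^k\varphi$ iff at least $k$ distinct children of $w$ satisfy $\varphi$;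 $(\mathcal{T},\pi,i)\models\varphi$ iff $(\mathcal{T},\pi(i))\models\varphi$; $(\mathcal{T},\pi,i)\models\mathsf{X}\psi$ iff $(\mathcal{T},\pi,i+1)\models\psi$; $(\mathcal{T},\pi,i)\models\psi_1\mathsf{U}\psi_2$ iff for some $j\ge i$, $(\mathcal{T},\pi,j)\models\psi_2$ and $(\mathcal{T},\pi,k)\models\psi_1$ for $i\le k<j$; Booleans standard. $\mathcal{T}\models\varphi$ means $(\mathcal{T},\varepsilon)\models\varphi$. $|\varphi|$ denotes the length (size) of the formula $\varphi$, i.e. its number of symbols, so that proper subformulas are strictly shorter. *)

theory Defs
  imports Main
begin

definition children :: "'d list set \<Rightarrow> 'd list \<Rightarrow> 'd list set" where
  "children T w = {v. v \<in> T \<and> (\<exists>d. v = w @ [d])}"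

definition kripke_tree :: "'d list set \<Rightarrow> bool" where
  "kripke_tree T \<longleftrightarrow> T \<noteq> {} \<and> (\<forall>u v. u @ v \<in> T \<longrightarrow> u \<in> T)
     \<and> (\<forall>w\<in>T. children T w \<noteq> {})"

definition is_path :: "'d list set \<Rightarrow> 'd list \<Rightarrow> (nat \<Rightarrow> 'd list) \<Rightarrow> bool" where
  "is_path T w \<pi> \<longleftrightarrow> \<pi> 0 = w \<and> (\<forall>k. \<pi> (Suc k) \<in> children T (\<pi> k))"

datatype 'ap sform =
    STrue
  | Prop 'ap
  | SNot "'ap sform"
  | SAnd "'ap sform" "'ap sform"
  | Ex "'ap pform"
  | Dk nat "'ap sform"
and 'ap pform =
    PState "'ap sform"
  | PNot "'ap pform"
  | PAnd "'ap pform" "'ap pform"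
  | Next "'ap pform"
  | Until "'ap pform" "'ap pform"

primrec wf_s :: "'ap sform \<Rightarrow> bool" and wf_p :: "'ap pform \<Rightarrow> bool" where
  "wf_s STrue = True"
| "wf_s (Prop a) = True"
| "wf_s (SNot f) = wf_s f"
| "wf_s (SAnd f g) = (wf_s f \<and> wf_s g)"
| "wf_s (Ex p) = wf_p p"
| "wf_s (Dk k f) = (1 \<le> k \<and> wf_s f)"
| "wf_p (PState f) = wf_s f"
| "wf_p (PNot p) = wf_p p"
| "wf_p (PAnd p q) = (wf_p p \<and> wf_p q)"
| "wf_p (Next p) = wf_p p"
| "wf_p (Until p q) = (wf_p p \<and> wf_p q)"

primrec ssize :: "'ap sform \<Rightarrow> nat" and psize :: "'ap pform \<Rightarrow> nat" where
  "ssize STrue = 1"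
| "ssize (Prop a) = 1"
| "ssize (SNot f) = 1 + ssize f"
| "ssize (SAnd f g) = 1 + ssize f + ssize g"
| "ssize (Ex p) = 1 + psize p"
| "ssize (Dk k f) = 1 + ssize f"
| "psize (PState f) = ssize f"
| "psize (PNot p) = 1 + psize p"
| "psize (PAnd p q) = 1 + psize p + psize q"
| "psize (Next p) = 1 + psize p"
| "psize (Until p q) = 1 + psize p + psize q"

primrec ssat :: "'d list set \<Rightarrow> ('d list \<Rightarrow> 'ap set) \<Rightarrow> 'ap sform \<Rightarrow> 'd list \<Rightarrow> bool"
  and psat :: "'d list set \<Rightarrow> ('d list \<Rightarrow> 'ap set) \<Rightarrow> 'ap pform \<Rightarrow> (nat \<Rightarrow> 'd list) \<Rightarrow> nat \<Rightarrow> bool"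
where
  "ssat T L STrue w = True"
| "ssat T L (Prop a) w = (a \<in> L w)"
| "ssat T L (SNot f) w = (\<not> ssat T L f w)"
| "ssat T L (SAnd f g) w = (ssat T L f w \<and> ssat T L g w)"
| "ssat T L (Ex p) w = (\<exists>\<pi>. is_path T w \<pi> \<and> psat T L p \<pi> 0)"
| "ssat T L (Dk k f) w =
     (\<exists>S. S \<subseteq> children T w \<and> finite S \<and> card S = k \<and> (\<forall>v\<in>S. ssat T L f v))"
| "psat T L (PState f) \<pi> i = ssat T L f (\<pi> i)"
| "psat T L (PNot p) \<pi> i = (\<not> psat T L p \<pi> i)"
| "psat T L (PAnd p q) \<pi> i = (psat T L p \<pi> i \<and> psat T L q \<pi> i)"
| "psat T L (Next p) \<pi> i = psat T L p \<pi> (Suc i)"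
| "psat T L (Until p q) \<pi> i =
     (\<exists>j\<ge>i. psat T L q \<pi> j \<and> (\<forall>k. i \<le> k \<and> k < j \<longrightarrow> psat T L p \<pi> k))"

definition models :: "'d list set \<Rightarrow> ('d list \<Rightarrow> 'ap set) \<Rightarrow> 'ap sform \<Rightarrow> bool" where
  "models T L f = ssat T L f []"

text \<open>AP = {p} is modelled by the type unit (p = ()). Directions are nat:
  0 continues the main path, 1 branches off to w_i. The main path node
  pi(i) is replicate i 0; w_i = pi(i) @ [1]; the subtree at w_i is the single
  path w_i @ replicate j 0. The branch w_{n+1} is omitted.\<close>

definition Tn :: "nat \<Rightarrow> nat list set" where
  "Tn n = {replicate i 0 | i. True}
        \<union> {replicate i 0 @ [1] @ replicate j 0 | i j. i \<noteq> n + 1}"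

definition Ln :: "nat \<Rightarrow> nat list \<Rightarrow> unit set" where
  "Ln n w = (if \<exists>i. i \<noteq> n + 1 \<and> w = replicate i 0 @ [1] then {()} else {})"

end

theory Submission
  imports Defs
begin

datatype kind = M nat | Minf | P | B

fun ksucc :: "kind \<Rightarrow> kind set" where
  "ksucc (M 0) = {Minf}"
| "ksucc (M (Suc a)) = {M a, P}"
| "ksucc Minf = {Minf, P}"
| "ksucc P = {B}"
| "ksucc B = {B}"

fun klab :: "kind \<Rightarrow> unit set" where
  "klab P = {()}"
| "klab _ = {}"

primrec ksat :: "unit sform \<Rightarrow> kind \<Rightarrow> bool"
  and kpsat :: "unit pform \<Rightarrow> (nat \<Rightarrow> kind) \<Rightarrow> nat \<Rightarrow> bool" where
  "ksat STrue x = True"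
| "ksat (Prop a) x = (a \<in> klab x)"
| "ksat (SNot f) x = (\<not> ksat f x)"
| "ksat (SAnd f g) x = (ksat f x \<and> ksat g x)"
| "ksat (sform.Ex p) x = (\<exists>\<rho>. \<rho> 0 = x \<and> (\<forall>t. \<rho> (Suc t) \<in> ksucc (\<rho> t)) \<and> kpsat p \<rho> 0)"
| "ksat (Dk k f) x = (\<exists>S. S \<subseteq> ksucc x \<and> finite S \<and> card S = k \<and> (\<forall>v\<in>S. ksat f v))"
| "kpsat (PState f) \<rho> i = ksat f (\<rho> i)"
| "kpsat (PNot p) \<rho> i = (\<not> kpsat p \<rho> i)"
| "kpsat (PAnd p q) \<rho> i = (kpsat p \<rho> i \<and> kpsat q \<rho> i)"
| "kpsat (Next p) \<rho> i = kpsat p \<rho> (Suc i)"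
| "kpsat (Until p q) \<rho> i =
     (\<exists>j\<ge>i. kpsat q \<rho> j \<and> (\<forall>k. i \<le> k \<and> k < j \<longrightarrow> kpsat p \<rho> k))"

lemma kpsat_shift_aux:
  "ksat f x = ksat f x"
  "\<forall>i n \<rho>. kpsat q \<rho> (i + n) = kpsat q (\<lambda>t. \<rho> (t + n)) i"
proof (induct f and q)
  case (Until q1 q2)
  have h1: "kpsat q1 \<rho> (k + n) = kpsat q1 (\<lambda>t. \<rho> (t + n)) k" for \<rho> k n using Until(1) by blast
  have h2: "kpsat q2 \<rho> (k + n) = kpsat q2 (\<lambda>t. \<rho> (t + n)) k" for \<rho> k n using Until(2) by blast
  show ?case
  proof (intro allI iffI)
    fix i n \<rho>
    assume "kpsat (Until q1 q2) \<rho> (i + n)"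
    then obtain j where j: "j \<ge> i + n" "kpsat q2 \<rho> j" "\<forall>k. i + n \<le> k \<and> k < j \<longrightarrow> kpsat q1 \<rho> k" by auto
    have "j - n \<ge> i" using j(1) by simp
    moreover have "kpsat q2 (\<lambda>t. \<rho> (t + n)) (j - n)" using h2[of \<rho> "j - n" n] j by simp
    moreover have "\<forall>k. i \<le> k \<and> k < j - n \<longrightarrow> kpsat q1 (\<lambda>t. \<rho> (t + n)) k"
    proof (intro allI impI)
      fix k assume "i \<le> k \<and> k < j - n"
      then have "i + n \<le> k + n \<and> k + n < j" by linarith
      then have "kpsat q1 \<rho> (k + n)" using j(3) by blast
      then show "kpsat q1 (\<lambda>t. \<rho> (t + n)) k" using h1 by simp
    qed
    ultimately show "kpsat (Until q1 q2) (\<lambda>t. \<rho> (t + n)) i" by auto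
  next
    fix i n \<rho>
    assume "kpsat (Until q1 q2) (\<lambda>t. \<rho> (t + n)) i"
    then obtain j where j: "j \<ge> i" "kpsat q2 (\<lambda>t. \<rho> (t + n)) j" "\<forall>k. i \<le> k \<and> k < j \<longrightarrow> kpsat q1 (\<lambda>t. \<rho> (t + n)) k" by auto
    have "j + n \<ge> i + n" using j(1) by simp
    moreover have "kpsat q2 \<rho> (j + n)" using h2 j by simp
    moreover have "\<forall>k. i + n \<le> k \<and> k < j + n \<longrightarrow> kpsat q1 \<rho> k"
    proof (intro allI impI)
      fix k assume k: "i + n \<le> k \<and> k < j + n"
      then have "i \<le> k - n \<and> k - n < j" by linarith
      then have "kpsat q1 (\<lambda>t. \<rho> (t + n)) (k - n)" using j(3) by blast
      then show "kpsat q1 \<rho> k" using h1[of \<rho> "k - n" n] k by simp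
    qed
    ultimately show "kpsat (Until q1 q2) \<rho> (i + n)" unfolding kpsat.simps by blast
  qed
next
  case (Next x)
  then show ?case by (metis add_Suc kpsat.simps(4))
qed (auto simp: add.commute)

lemma kpsat_shift: "kpsat q \<rho> (i + n) = kpsat q (\<lambda>t. \<rho> (t + n)) i"
  using kpsat_shift_aux(2)[of q] by blast

lemma kpsat_Suc: "kpsat q \<rho> (Suc i) = kpsat q (\<lambda>t. \<rho> (Suc t)) i"
  using kpsat_shift[of q \<rho> i 1] by simp

lemma until_exp:
  "kpsat (Until q1 q2) \<rho> i = (kpsat q2 \<rho> i \<or> (kpsat q1 \<rho> i \<and> kpsat (Until q1 q2) \<rho> (Suc i)))"
proof
  assume "kpsat (Until q1 q2) \<rho> i"
  then obtain j where j: "j \<ge> i" "kpsat q2 \<rho> j" "\<forall>k. i \<le> k \<and> k < j \<longrightarrow> kpsat q1 \<rho> k" by auto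
  show "kpsat q2 \<rho> i \<or> (kpsat q1 \<rho> i \<and> kpsat (Until q1 q2) \<rho> (Suc i))"
  proof (cases "j = i")
    case True then show ?thesis using j by simp
  next
    case False
    then have "kpsat q1 \<rho> i" using j by auto
    moreover have "kpsat (Until q1 q2) \<rho> (Suc i)"
      using j False by (auto intro!: exI[of _ j])
    ultimately show ?thesis by simp
  qed
next
  assume "kpsat q2 \<rho> i \<or> (kpsat q1 \<rho> i \<and> kpsat (Until q1 q2) \<rho> (Suc i))"
  then show "kpsat (Until q1 q2) \<rho> i"
  proof
    assume "kpsat q2 \<rho> i" then show ?thesis by auto
  next
    assume a: "kpsat q1 \<rho> i \<and> kpsat (Until q1 q2) \<rho> (Suc i)"
    then obtain j where j: "j \<ge> Suc i" "kpsat q2 \<rho> j" "\<forall>k. Suc i \<le> k \<and> k < j \<longrightarrow> kpsat q1 \<rho> k" by auto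
    show ?thesis using a j by (auto intro!: exI[of _ j]) (metis Suc_leI le_neq_implies_less)
  qed
qed

definition wd :: "nat \<Rightarrow> nat \<Rightarrow> (nat \<Rightarrow> kind) \<Rightarrow> nat \<Rightarrow> kind" where
  "wd k z \<tau> t = (if t \<le> k then M (z + k - t) else \<tau> (t - Suc k))"

lemma wd0: "wd k z \<tau> 0 = M (z + k)" by (simp add: wd_def)
lemma wd_shift_Suc: "(\<lambda>t. wd (Suc k) z \<tau> (Suc t)) = wd k z \<tau>"
  by (auto simp: wd_def fun_eq_iff)
lemma wd_shift_0: "(\<lambda>t. wd 0 z \<tau> (Suc t)) = \<tau>"
  by (auto simp: wd_def fun_eq_iff)

definition Q :: "unit pform \<Rightarrow> nat \<Rightarrow> nat \<Rightarrow> (nat \<Rightarrow> kind) \<Rightarrow> bool" where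
  "Q q k z \<tau> = kpsat q (wd k z \<tau>) 0"

lemma Q_Suc_next: "kpsat q (wd (Suc k) z \<tau>) (Suc 0) = Q q k z \<tau>"
  by (simp add: kpsat_Suc wd_shift_Suc Q_def)
lemma Q_0_next: "kpsat q (wd 0 z \<tau>) (Suc 0) = kpsat q \<tau> 0"
  by (simp add: kpsat_Suc wd_shift_0)

definition PB :: "nat \<Rightarrow> kind" where "PB t = (if t = 0 then P else B)"

lemma path_M_aux:
  assumes "\<rho> 0 = M a" "\<forall>t. \<rho> (Suc t) \<in> ksucc (\<rho> t)"
  shows "t \<le> a \<Longrightarrow> (\<forall>t'\<le>t. \<rho> t' = M (a - t')) \<or> (\<exists>k<t. (\<forall>t'\<le>k. \<rho> t' = M (a - t')) \<and> \<rho> (Suc k) = P)"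
proof (induction t)
  case 0
  then show ?case using assms by simp
next
  case (Suc t)
  then have IH: "(\<forall>t'\<le>t. \<rho> t' = M (a - t')) \<or> (\<exists>k<t. (\<forall>t'\<le>k. \<rho> t' = M (a - t')) \<and> \<rho> (Suc k) = P)" by simp
  show ?case
  proof (cases "\<forall>t'\<le>t. \<rho> t' = M (a - t')")
    case True
    then have rt: "\<rho> t = M (Suc (a - Suc t))" using Suc(2) by (simp add: Suc_diff_Suc)
    have "\<rho> (Suc t) \<in> ksucc (\<rho> t)" using assms(2) by blast
    then have "\<rho> (Suc t) = M (a - Suc t) \<or> \<rho> (Suc t) = P" using rt by simp
    then show ?thesis
    proof
      assume "\<rho> (Suc t) = M (a - Suc t)"
      then have "\<forall>t'\<le>Suc t. \<rho> t' = M (a - t')" using True by (metis le_Suc_eq)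
      then show ?thesis by blast
    next
      assume "\<rho> (Suc t) = P"
      then show ?thesis using True by blast
    qed
  next
    case False
    then show ?thesis using IH by (meson less_SucI)
  qed
qed

lemma after_P:
  assumes "\<forall>t. \<rho> (Suc t) \<in> ksucc (\<rho> t)" "\<rho> j = P"
  shows "\<rho> (j + Suc u) = B"
proof (induction u)
  case 0
  then show ?case using assms by (metis add_Suc_right add_0_right ksucc.simps(4) singletonD)
next
  case (Suc u)
  then show ?case using assms(1) by (metis add_Suc_right ksucc.simps(5) singletonD)
qed

lemma path_M:
  assumes "\<rho> 0 = M a" "\<forall>t. \<rho> (Suc t) \<in> ksucc (\<rho> t)"
  shows "(\<exists>k z. 1 \<le> z \<and> k + z = a \<and> \<rho> = wd k z PB) \<or>
         (\<exists>\<tau>. \<tau> 0 = Minf \<and> (\<forall>t. \<tau> (Suc t) \<in> ksucc (\<tau> t)) \<and> \<rho> = wd a 0 \<tau>)"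
proof -
  from path_M_aux[OF assms, of a]
  have "(\<forall>t'\<le>a. \<rho> t' = M (a - t')) \<or> (\<exists>k<a. (\<forall>t'\<le>k. \<rho> t' = M (a - t')) \<and> \<rho> (Suc k) = P)" by simp
  then show ?thesis
  proof
    assume A: "\<forall>t'\<le>a. \<rho> t' = M (a - t')"
    define \<tau> where "\<tau> = (\<lambda>t. \<rho> (t + Suc a))"
    have "\<rho> (Suc a) \<in> ksucc (\<rho> a)" using assms(2) by blast
    then have t0: "\<tau> 0 = Minf" using A by (simp add: \<tau>_def)
    have tp: "\<forall>t. \<tau> (Suc t) \<in> ksucc (\<tau> t)" using assms(2) by (simp add: \<tau>_def)
    have "\<rho> = wd a 0 \<tau>"
    proof
      fix t show "\<rho> t = wd a 0 \<tau> t"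
        using A by (auto simp: wd_def \<tau>_def)
    qed
    then show ?thesis using t0 tp by blast
  next
    assume "\<exists>k<a. (\<forall>t'\<le>k. \<rho> t' = M (a - t')) \<and> \<rho> (Suc k) = P"
    then obtain k where k: "k < a" "\<forall>t'\<le>k. \<rho> t' = M (a - t')" "\<rho> (Suc k) = P" by blast
    have "\<rho> = wd k (a - k) PB"
    proof
      fix t show "\<rho> t = wd k (a - k) PB t"
      proof (cases "t \<le> k")
        case True then show ?thesis using k by (simp add: wd_def)
      next
        case False
        then obtain u where u: "t = Suc k + u" by (metis add_Suc less_imp_Suc_add not_le)
        show ?thesis
        proof (cases u)
          case 0 then show ?thesis using u k False by (simp add: wd_def PB_def)
        next
          case (Suc u')
          have "\<rho> (Suc k + Suc u') = B" using after_P[OF assms(2) k(3)] by blast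
          then show ?thesis using u Suc False by (simp add: wd_def PB_def)
        qed
      qed
    qed
    moreover have "1 \<le> a - k" "k + (a - k) = a" using k by auto
    ultimately show ?thesis by blast
  qed
qed

lemma valid_branch:
  assumes "1 \<le> z" shows "wd k z PB (Suc t) \<in> ksucc (wd k z PB t)"
proof -
  consider "Suc t \<le> k" | "t = k" | "k < t" by linarith
  then show ?thesis
  proof cases
    case 1
    then have "z + k - t = Suc (z + k - Suc t)" by simp
    then show ?thesis using 1 by (simp add: wd_def)
  next
    case 2
    then obtain z' where "z = Suc z'" using assms by (metis Suc_le_D One_nat_def)
    then show ?thesis using 2 by (simp add: wd_def PB_def)
  next
    case 3
    then show ?thesis by (auto simp: wd_def PB_def)
  qed
qed

lemma valid_defect:
  assumes "\<tau> 0 = Minf" "\<forall>t. \<tau> (Suc t) \<in> ksucc (\<tau> t)"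
  shows "wd k 0 \<tau> (Suc t) \<in> ksucc (wd k 0 \<tau> t)"
proof -
  consider "Suc t \<le> k" | "t = k" | "k < t" by linarith
  then show ?thesis
  proof cases
    case 1
    then have "k - t = Suc (k - Suc t)" by simp
    then show ?thesis using 1 by (simp add: wd_def)
  next
    case 2
    then show ?thesis using assms by (simp add: wd_def)
  next
    case 3
    then have "Suc t - Suc k = Suc (t - Suc k)" by simp
    then show ?thesis using 3 assms by (simp add: wd_def)
  qed
qed

lemma card_ex:
  assumes "finite A"
  shows "(\<exists>S. S \<subseteq> A \<and> finite S \<and> card S = j \<and> (\<forall>v\<in>S. g v)) \<longleftrightarrow> j \<le> card {v\<in>A. g v}"
proof
  assume "\<exists>S. S \<subseteq> A \<and> finite S \<and> card S = j \<and> (\<forall>v\<in>S. g v)"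
  then obtain S where S: "S \<subseteq> A" "card S = j" "\<forall>v\<in>S. g v" by blast
  then have "S \<subseteq> {v\<in>A. g v}" by blast
  moreover have "finite {v\<in>A. g v}" using assms by simp
  ultimately show "j \<le> card {v\<in>A. g v}" using S(2) by (metis card_mono)
next
  assume "j \<le> card {v\<in>A. g v}"
  then obtain T where "T \<subseteq> {v\<in>A. g v}" "card T = j" "finite T" by (rule obtain_subset_with_card_n)
  then show "\<exists>S. S \<subseteq> A \<and> finite S \<and> card S = j \<and> (\<forall>v\<in>S. g v)" by blast
qed

lemma dk_step:
  assumes "ksat g (M a) = ksat g (M (Suc a))"
  shows "ksat (Dk j g) (M (Suc a)) = ksat (Dk j g) (M (Suc (Suc a)))"
proof -
  have c: "card {v\<in>{M a, P}. ksat g v} = card {v\<in>{M (Suc a), P}. ksat g v}"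
  proof -
    have e: "{v\<in>{x, P}. ksat g v} = (if ksat g x then {x} else {}) \<union> (if ksat g P then {P} else {})" for x
      by auto
    show ?thesis unfolding e using assms
      by (cases "ksat g (M a)"; cases "ksat g P") auto
  qed
  show ?thesis
    by (simp only: ksat.simps ksucc.simps card_ex[OF finite.insertI[OF finite.insertI[OF finite.emptyI]]] c)
qed

lemma Q_path: "kpsat q \<rho> 0 \<Longrightarrow> \<rho> = wd k z \<tau> \<Longrightarrow> Q q k z \<tau>"
  by (simp add: Q_def)

lemma ex_intro: "\<sigma> 0 = x \<Longrightarrow> (\<And>t. \<sigma> (Suc t) \<in> ksucc (\<sigma> t)) \<Longrightarrow> kpsat q \<sigma> 0 \<Longrightarrow> ksat (sform.Ex q) x"
  by auto

lemma ex_step: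
  assumes b1: "1 \<le> \<beta>" and ab: "\<alpha> + \<beta> \<le> psize q + 1" and g: "\<gamma> \<le> psize q + 1"
    and dI: "\<forall>k z \<tau>. \<alpha> \<le> k \<longrightarrow> \<gamma> \<le> k + z \<longrightarrow> Q q (Suc k) z \<tau> = Q q k z \<tau>"
    and zI: "\<forall>k z \<tau>. \<beta> \<le> z \<longrightarrow> Q q k (Suc z) \<tau> = Q q k z \<tau>"
    and a: "Suc (psize q) \<le> a"
  shows "ksat (sform.Ex q) (M a) = ksat (sform.Ex q) (M (Suc a))"
proof
  assume "ksat (sform.Ex q) (M a)"
  then obtain \<rho> where r: "\<rho> 0 = M a" "\<forall>t. \<rho> (Suc t) \<in> ksucc (\<rho> t)" "kpsat q \<rho> 0" by auto
  show "ksat (sform.Ex q) (M (Suc a))"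
    using path_M[OF r(1,2)]
  proof
    assume "\<exists>k z. 1 \<le> z \<and> k + z = a \<and> \<rho> = wd k z PB"
    then obtain k z where kz: "1 \<le> z" "k + z = a" "\<rho> = wd k z PB" by blast
    have Qk: "Q q k z PB" using r(3) kz(3) by (simp add: Q_def)
    show ?thesis
    proof (cases "\<alpha> \<le> k")
      case True
      have "\<gamma> \<le> k + z" using kz(2) g a by linarith
      then have "Q q (Suc k) z PB" using dI True Qk by blast
      then show ?thesis
        by (intro ex_intro[of "wd (Suc k) z PB"]) (use valid_branch[OF kz(1)] kz(2) in \<open>simp_all add: Q_def wd0\<close>)
    next
      case False
      have "\<beta> \<le> z" using False kz(2) ab a by linarith
      then have "Q q k (Suc z) PB" using zI Qk by blast
      moreover have "1 \<le> Suc z" by simp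
      ultimately show ?thesis
        by (intro ex_intro[of "wd k (Suc z) PB"]) (use valid_branch[of "Suc z" k] kz(2) in \<open>simp_all add: Q_def wd0\<close>)
    qed
  next
    assume "\<exists>\<tau>. \<tau> 0 = Minf \<and> (\<forall>t. \<tau> (Suc t) \<in> ksucc (\<tau> t)) \<and> \<rho> = wd a 0 \<tau>"
    then obtain \<tau> where t: "\<tau> 0 = Minf" "\<forall>t. \<tau> (Suc t) \<in> ksucc (\<tau> t)" "\<rho> = wd a 0 \<tau>" by blast
    have "Q q a 0 \<tau>" using r(3) t(3) by (simp add: Q_def)
    moreover have "\<alpha> \<le> a" "\<gamma> \<le> a + 0" using ab g a b1 by linarith+
    ultimately have "Q q (Suc a) 0 \<tau>" using dI by blast
    then show ?thesis
      by (intro ex_intro[of "wd (Suc a) 0 \<tau>"]) (use valid_defect[OF t(1,2)] in \<open>simp_all add: Q_def wd0\<close>)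
  qed
next
  assume "ksat (sform.Ex q) (M (Suc a))"
  then obtain \<rho> where r: "\<rho> 0 = M (Suc a)" "\<forall>t. \<rho> (Suc t) \<in> ksucc (\<rho> t)" "kpsat q \<rho> 0" by auto
  show "ksat (sform.Ex q) (M a)"
    using path_M[OF r(1,2)]
  proof
    assume "\<exists>k z. 1 \<le> z \<and> k + z = Suc a \<and> \<rho> = wd k z PB"
    then obtain k z where kz: "1 \<le> z" "k + z = Suc a" "\<rho> = wd k z PB" by blast
    have Qk: "Q q k z PB" using r(3) kz(3) by (simp add: Q_def)
    show ?thesis
    proof (cases "\<alpha> < k")
      case True
      then obtain k' where k': "k = Suc k'" by (cases k) auto
      have "\<alpha> \<le> k'" "\<gamma> \<le> k' + z" using True k' kz(2) g a by linarith+
      then have "Q q (Suc k') z PB = Q q k' z PB" using dI by blast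
      then have "Q q k' z PB" using Qk k' by simp
      moreover have "k' + z = a" using k' kz(2) by simp
      ultimately show ?thesis
        by (intro ex_intro[of "wd k' z PB"]) (use valid_branch[OF kz(1)] in \<open>simp_all add: Q_def wd0\<close>)
    next
      case False
      have zb: "Suc \<beta> \<le> z" using False kz(2) ab a by linarith
      then obtain z' where z': "z = Suc z'" by (cases z) auto
      have z'b: "\<beta> \<le> z'" "1 \<le> z'" using zb z' b1 by linarith+
      have "Q q k z' PB" using zI Qk z' z'b(1) by blast
      moreover have "k + z' = a" using z' kz(2) by simp
      ultimately show ?thesis
        by (intro ex_intro[of "wd k z' PB"]) (use valid_branch[OF z'b(2)] in \<open>simp_all add: Q_def wd0\<close>)
    qed
  next
    assume "\<exists>\<tau>. \<tau> 0 = Minf \<and> (\<forall>t. \<tau> (Suc t) \<in> ksucc (\<tau> t)) \<and> \<rho> = wd (Suc a) 0 \<tau>"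
    then obtain \<tau> where t: "\<tau> 0 = Minf" "\<forall>t. \<tau> (Suc t) \<in> ksucc (\<tau> t)" "\<rho> = wd (Suc a) 0 \<tau>" by blast
    have "Q q (Suc a) 0 \<tau>" using r(3) t(3) by (simp add: Q_def)
    moreover have "\<alpha> \<le> a" "\<gamma> \<le> a + 0" using ab g a b1 by linarith+
    ultimately have "Q q a 0 \<tau>" using dI by blast
    then show ?thesis
      by (intro ex_intro[of "wd a 0 \<tau>"]) (use valid_defect[OF t(1,2)] in \<open>simp_all add: Q_def wd0\<close>)
  qed
qed

lemma size_pos: fixes f :: "'a sform" and q :: "'a pform" shows "1 \<le> ssize f" "1 \<le> psize q"
  by (induct f and q) auto

lemma Q_exp: "Q (Until q1 q2) k z \<tau> = (Q q2 k z \<tau> \<or> (Q q1 k z \<tau> \<and> kpsat (Until q1 q2) (wd k z \<tau>) (Suc 0)))"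
  unfolding Q_def by (subst until_exp) simp

lemma main:
  shows "\<forall>a. ssize f \<le> a \<longrightarrow> ksat f (M a) = ksat f (M (Suc a))"
    and "\<exists>\<alpha> \<beta> \<gamma>. 1 \<le> \<beta> \<and> \<alpha> + \<beta> \<le> psize q + 1 \<and> \<gamma> \<le> psize q + 1 \<and>
          (\<forall>k z \<tau>. \<alpha> \<le> k \<longrightarrow> \<gamma> \<le> k + z \<longrightarrow> Q q (Suc k) z \<tau> = Q q k z \<tau>) \<and>
          (\<forall>k z \<tau>. \<beta> \<le> z \<longrightarrow> Q q k (Suc z) \<tau> = Q q k z \<tau>)"
proof (induct f and q)
  case STrue then show ?case by simp
next
  case (Prop x) then show ?case by simp
next
  case (SNot f)
  show ?case
  proof (intro allI impI)
    fix a assume "ssize (SNot f) \<le> a"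
    then have "ssize f \<le> a" by simp
    then have "ksat f (M a) = ksat f (M (Suc a))" using SNot by blast
    then show "ksat (SNot f) (M a) = ksat (SNot f) (M (Suc a))" by (simp only: ksat.simps)
  qed
next
  case (SAnd f g)
  show ?case
  proof (intro allI impI)
    fix a assume "ssize (SAnd f g) \<le> a"
    then have "ssize f \<le> a" "ssize g \<le> a" by simp_all
    then have "ksat f (M a) = ksat f (M (Suc a))" "ksat g (M a) = ksat g (M (Suc a))" using SAnd by blast+
    then show "ksat (SAnd f g) (M a) = ksat (SAnd f g) (M (Suc a))" by (simp only: ksat.simps)
  qed
next
  case (Ex q)
  then obtain \<alpha> \<beta> \<gamma> where h: "1 \<le> \<beta>" "\<alpha> + \<beta> \<le> psize q + 1" "\<gamma> \<le> psize q + 1"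
    "\<forall>k z \<tau>. \<alpha> \<le> k \<longrightarrow> \<gamma> \<le> k + z \<longrightarrow> Q q (Suc k) z \<tau> = Q q k z \<tau>"
    "\<forall>k z \<tau>. \<beta> \<le> z \<longrightarrow> Q q k (Suc z) \<tau> = Q q k z \<tau>" by blast
  show ?case
  proof (intro allI impI)
    fix a assume "ssize (sform.Ex q) \<le> a"
    then have "Suc (psize q) \<le> a" by simp
    then show "ksat (sform.Ex q) (M a) = ksat (sform.Ex q) (M (Suc a))" using ex_step[OF h] by blast
  qed
next
  case (Dk j g)
  show ?case
  proof (intro allI impI)
    fix a assume "ssize (Dk j g) \<le> a"
    then obtain a' where a': "a = Suc a'" "ssize g \<le> a'" by (cases a) auto
    then have "ksat g (M a') = ksat g (M (Suc a'))" using Dk by blast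
    then show "ksat (Dk j g) (M a) = ksat (Dk j g) (M (Suc a))" using dk_step a'(1) by blast
  qed
next
  case (PState f)
  have QP: "Q (PState f) k z \<tau> = ksat f (M (z + k))" for k z \<tau> by (simp add: Q_def wd0)
  have d: "\<forall>k z \<tau>. 0 \<le> k \<longrightarrow> ssize f \<le> k + z \<longrightarrow> Q (PState f) (Suc k) z \<tau> = Q (PState f) k z \<tau>"
  proof (intro allI impI)
    fix k z \<tau> assume "0 \<le> k" "ssize f \<le> k + z"
    then have "ssize f \<le> z + k" by simp
    then have "ksat f (M (z + k)) = ksat f (M (Suc (z + k)))" using PState by blast
    then show "Q (PState f) (Suc k) z \<tau> = Q (PState f) k z \<tau>" by (simp add: QP)
  qed
  have zz: "\<forall>k z \<tau>. ssize f \<le> z \<longrightarrow> Q (PState f) k (Suc z) \<tau> = Q (PState f) k z \<tau>"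
  proof (intro allI impI)
    fix k z \<tau> assume "ssize f \<le> z"
    then have "ssize f \<le> z + k" by simp
    then have "ksat f (M (z + k)) = ksat f (M (Suc (z + k)))" using PState by blast
    then show "Q (PState f) k (Suc z) \<tau> = Q (PState f) k z \<tau>" by (simp add: QP)
  qed
  have "1 \<le> ssize f" "0 + ssize f \<le> psize (PState f) + 1" "ssize f \<le> psize (PState f) + 1"
    using size_pos(1)[of f] by simp_all
  then show ?case using d zz by blast
next
  case (PNot q)
  then obtain \<alpha> \<beta> \<gamma> where h: "1 \<le> \<beta>" "\<alpha> + \<beta> \<le> psize q + 1" "\<gamma> \<le> psize q + 1"
    "\<forall>k z \<tau>. \<alpha> \<le> k \<longrightarrow> \<gamma> \<le> k + z \<longrightarrow> Q q (Suc k) z \<tau> = Q q k z \<tau>"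
    "\<forall>k z \<tau>. \<beta> \<le> z \<longrightarrow> Q q k (Suc z) \<tau> = Q q k z \<tau>" by blast
  have QN: "Q (PNot q) k z \<tau> = (\<not> Q q k z \<tau>)" for k z \<tau> by (simp add: Q_def)
  have "\<alpha> + \<beta> \<le> psize (PNot q) + 1" "\<gamma> \<le> psize (PNot q) + 1" using h by simp_all
  moreover have "\<forall>k z \<tau>. \<alpha> \<le> k \<longrightarrow> \<gamma> \<le> k + z \<longrightarrow> Q (PNot q) (Suc k) z \<tau> = Q (PNot q) k z \<tau>"
    using h(4) by (simp add: QN)
  moreover have "\<forall>k z \<tau>. \<beta> \<le> z \<longrightarrow> Q (PNot q) k (Suc z) \<tau> = Q (PNot q) k z \<tau>"
    using h(5) by (simp add: QN)
  ultimately show ?case using h(1) by blast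
next
  case (PAnd q1 q2)
  from PAnd(1) obtain \<alpha>1 \<beta>1 \<gamma>1 where h1: "1 \<le> \<beta>1" "\<alpha>1 + \<beta>1 \<le> psize q1 + 1" "\<gamma>1 \<le> psize q1 + 1"
    "\<forall>k z \<tau>. \<alpha>1 \<le> k \<longrightarrow> \<gamma>1 \<le> k + z \<longrightarrow> Q q1 (Suc k) z \<tau> = Q q1 k z \<tau>"
    "\<forall>k z \<tau>. \<beta>1 \<le> z \<longrightarrow> Q q1 k (Suc z) \<tau> = Q q1 k z \<tau>" by blast
  from PAnd(2) obtain \<alpha>2 \<beta>2 \<gamma>2 where h2: "1 \<le> \<beta>2" "\<alpha>2 + \<beta>2 \<le> psize q2 + 1" "\<gamma>2 \<le> psize q2 + 1"
    "\<forall>k z \<tau>. \<alpha>2 \<le> k \<longrightarrow> \<gamma>2 \<le> k + z \<longrightarrow> Q q2 (Suc k) z \<tau> = Q q2 k z \<tau>"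
    "\<forall>k z \<tau>. \<beta>2 \<le> z \<longrightarrow> Q q2 k (Suc z) \<tau> = Q q2 k z \<tau>" by blast
  have QA: "Q (PAnd q1 q2) k z \<tau> = (Q q1 k z \<tau> \<and> Q q2 k z \<tau>)" for k z \<tau> by (simp add: Q_def)
  have s1: "max \<alpha>1 \<alpha>2 + max \<beta>1 \<beta>2 \<le> psize (PAnd q1 q2) + 1" "max \<gamma>1 \<gamma>2 \<le> psize (PAnd q1 q2) + 1"
    "1 \<le> max \<beta>1 \<beta>2" using h1(1,2,3) h2(1,2,3) by (simp_all add: max_def)
  have d: "\<forall>k z \<tau>. max \<alpha>1 \<alpha>2 \<le> k \<longrightarrow> max \<gamma>1 \<gamma>2 \<le> k + z \<longrightarrow> Q (PAnd q1 q2) (Suc k) z \<tau> = Q (PAnd q1 q2) k z \<tau>"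
  proof (intro allI impI)
    fix k z \<tau> assume "max \<alpha>1 \<alpha>2 \<le> k" "max \<gamma>1 \<gamma>2 \<le> k + z"
    then have "\<alpha>1 \<le> k" "\<gamma>1 \<le> k + z" "\<alpha>2 \<le> k" "\<gamma>2 \<le> k + z" by simp_all
    then have "Q q1 (Suc k) z \<tau> = Q q1 k z \<tau>" "Q q2 (Suc k) z \<tau> = Q q2 k z \<tau>" using h1(4) h2(4) by blast+
    then show "Q (PAnd q1 q2) (Suc k) z \<tau> = Q (PAnd q1 q2) k z \<tau>" by (simp add: QA)
  qed
  have zz: "\<forall>k z \<tau>. max \<beta>1 \<beta>2 \<le> z \<longrightarrow> Q (PAnd q1 q2) k (Suc z) \<tau> = Q (PAnd q1 q2) k z \<tau>"
  proof (intro allI impI)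
    fix k z \<tau> assume "max \<beta>1 \<beta>2 \<le> z"
    then have "\<beta>1 \<le> z" "\<beta>2 \<le> z" by simp_all
    then have "Q q1 k (Suc z) \<tau> = Q q1 k z \<tau>" "Q q2 k (Suc z) \<tau> = Q q2 k z \<tau>" using h1(5) h2(5) by blast+
    then show "Q (PAnd q1 q2) k (Suc z) \<tau> = Q (PAnd q1 q2) k z \<tau>" by (simp add: QA)
  qed
  show ?case using s1 d zz by blast
next
  case (Next q)
  then obtain \<alpha> \<beta> \<gamma> where h: "1 \<le> \<beta>" "\<alpha> + \<beta> \<le> psize q + 1" "\<gamma> \<le> psize q + 1"
    "\<forall>k z \<tau>. \<alpha> \<le> k \<longrightarrow> \<gamma> \<le> k + z \<longrightarrow> Q q (Suc k) z \<tau> = Q q k z \<tau>"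
    "\<forall>k z \<tau>. \<beta> \<le> z \<longrightarrow> Q q k (Suc z) \<tau> = Q q k z \<tau>" by blast
  have QS: "Q (Next q) (Suc k) z \<tau> = Q q k z \<tau>" for k z \<tau> by (simp add: Q_def Q_Suc_next)
  have Q0: "Q (Next q) 0 z \<tau> = kpsat q \<tau> 0" for z \<tau> by (simp add: Q_def Q_0_next)
  have d: "\<forall>k z \<tau>. Suc \<alpha> \<le> k \<longrightarrow> Suc \<gamma> \<le> k + z \<longrightarrow> Q (Next q) (Suc k) z \<tau> = Q (Next q) k z \<tau>"
  proof (intro allI impI)
    fix k z \<tau> assume a1: "Suc \<alpha> \<le> k" and a2: "Suc \<gamma> \<le> k + z"
    obtain k' where k': "k = Suc k'" using a1 by (cases k) auto
    have "\<alpha> \<le> k'" "\<gamma> \<le> k' + z" using a1 a2 k' by simp_all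
    then have "Q q (Suc k') z \<tau> = Q q k' z \<tau>" using h(4) by blast
    then show "Q (Next q) (Suc k) z \<tau> = Q (Next q) k z \<tau>" using k' by (simp add: QS)
  qed
  have zz: "\<forall>k z \<tau>. \<beta> \<le> z \<longrightarrow> Q (Next q) k (Suc z) \<tau> = Q (Next q) k z \<tau>"
  proof (intro allI impI)
    fix k z \<tau> assume a1: "\<beta> \<le> z"
    show "Q (Next q) k (Suc z) \<tau> = Q (Next q) k z \<tau>"
    proof (cases k)
      case 0 then show ?thesis by (simp add: Q0)
    next
      case (Suc k')
      have "Q q k' (Suc z) \<tau> = Q q k' z \<tau>" using h(5) a1 by blast
      then show ?thesis using Suc by (simp add: QS)
    qed
  qed
  have "Suc \<alpha> + \<beta> \<le> psize (Next q) + 1" "Suc \<gamma> \<le> psize (Next q) + 1" using h(2,3) by simp_all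
  then show ?case using h(1) d zz by blast
next
  case (Until q1 q2)
  from Until(1) obtain \<alpha>1 \<beta>1 \<gamma>1 where h1: "1 \<le> \<beta>1" "\<alpha>1 + \<beta>1 \<le> psize q1 + 1" "\<gamma>1 \<le> psize q1 + 1"
    "\<forall>k z \<tau>. \<alpha>1 \<le> k \<longrightarrow> \<gamma>1 \<le> k + z \<longrightarrow> Q q1 (Suc k) z \<tau> = Q q1 k z \<tau>"
    "\<forall>k z \<tau>. \<beta>1 \<le> z \<longrightarrow> Q q1 k (Suc z) \<tau> = Q q1 k z \<tau>" by blast
  from Until(2) obtain \<alpha>2 \<beta>2 \<gamma>2 where h2: "1 \<le> \<beta>2" "\<alpha>2 + \<beta>2 \<le> psize q2 + 1" "\<gamma>2 \<le> psize q2 + 1"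
    "\<forall>k z \<tau>. \<alpha>2 \<le> k \<longrightarrow> \<gamma>2 \<le> k + z \<longrightarrow> Q q2 (Suc k) z \<tau> = Q q2 k z \<tau>"
    "\<forall>k z \<tau>. \<beta>2 \<le> z \<longrightarrow> Q q2 k (Suc z) \<tau> = Q q2 k z \<tau>" by blast
  let ?U = "Until q1 q2"
  have QS: "Q ?U (Suc k) z \<tau> = (Q q2 (Suc k) z \<tau> \<or> (Q q1 (Suc k) z \<tau> \<and> Q ?U k z \<tau>))" for k z \<tau>
    using Q_exp[of q1 q2 "Suc k" z \<tau>] by (simp add: Q_Suc_next)
  have Q0: "Q ?U 0 z \<tau> = (Q q2 0 z \<tau> \<or> (Q q1 0 z \<tau> \<and> kpsat ?U \<tau> 0))" for z \<tau>
    using Q_exp[of q1 q2 0 z \<tau>] by (simp add: Q_0_next)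
  have d: "Q ?U (Suc k) z \<tau> = Q ?U k z \<tau>"
    if "max \<alpha>1 \<alpha>2 \<le> k" "max \<gamma>1 \<gamma>2 \<le> k + z" for k z \<tau>
  proof -
    have "\<alpha>1 \<le> k" "\<gamma>1 \<le> k + z" "\<alpha>2 \<le> k" "\<gamma>2 \<le> k + z" using that by simp_all
    then have e1: "Q q1 (Suc k) z \<tau> = Q q1 k z \<tau>" and e2: "Q q2 (Suc k) z \<tau> = Q q2 k z \<tau>"
      using h1(4) h2(4) by blast+
    have "Q ?U k z \<tau> = (Q q2 k z \<tau> \<or> (Q q1 k z \<tau> \<and> kpsat ?U (wd k z \<tau>) (Suc 0)))" by (rule Q_exp)
    then show ?thesis using QS[of k z \<tau>] e1 e2 by blast
  qed
  have zz: "Q ?U k (Suc z) \<tau> = Q ?U k z \<tau>" if "max \<beta>1 \<beta>2 \<le> z" for k z \<tau>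
  proof (induction k)
    case 0
    have "\<beta>1 \<le> z" "\<beta>2 \<le> z" using that by simp_all
    then have "Q q1 0 (Suc z) \<tau> = Q q1 0 z \<tau>" "Q q2 0 (Suc z) \<tau> = Q q2 0 z \<tau>" using h1(5) h2(5) by blast+
    then show ?case by (simp add: Q0)
  next
    case (Suc k)
    have "\<beta>1 \<le> z" "\<beta>2 \<le> z" using that by simp_all
    then have "Q q1 (Suc k) (Suc z) \<tau> = Q q1 (Suc k) z \<tau>" "Q q2 (Suc k) (Suc z) \<tau> = Q q2 (Suc k) z \<tau>" using h1(5) h2(5) by blast+
    then show ?case using Suc.IH by (simp add: QS)
  qed
  have s1: "max \<alpha>1 \<alpha>2 + max \<beta>1 \<beta>2 \<le> psize ?U + 1" "max \<gamma>1 \<gamma>2 \<le> psize ?U + 1"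
    "1 \<le> max \<beta>1 \<beta>2" using h1(1,2,3) h2(1,2,3) by (simp_all add: max_def)
  have d': "\<forall>k z \<tau>. max \<alpha>1 \<alpha>2 \<le> k \<longrightarrow> max \<gamma>1 \<gamma>2 \<le> k + z \<longrightarrow> Q ?U (Suc k) z \<tau> = Q ?U k z \<tau>"
    using d by blast
  have zz': "\<forall>k z \<tau>. max \<beta>1 \<beta>2 \<le> z \<longrightarrow> Q ?U k (Suc z) \<tau> = Q ?U k z \<tau>"
    using zz by blast
  show ?case using s1 d' zz' by blast
qed

lemma transfer:
  fixes T :: "'d list set" and L :: "'d list \<Rightarrow> unit set" and h :: "'d list \<Rightarrow> kind"
  assumes lab: "\<forall>w\<in>T. L w = klab (h w)"
    and bij: "\<forall>w\<in>T. bij_betw h (children T w) (ksucc (h w))"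
  shows "\<forall>w\<in>T. ssat T L f w = ksat f (h w)"
    and "\<forall>\<pi> i. (\<forall>t. \<pi> t \<in> T) \<longrightarrow> psat T L q \<pi> i = kpsat q (h \<circ> \<pi>) i"
proof (induct f and q)
  case (Prop x) then show ?case using lab by simp
next
  case (Ex q)
  show ?case
  proof (intro ballI iffI)
    fix w assume w: "w \<in> T" and "ssat T L (sform.Ex q) w"
    then obtain \<pi> where p: "is_path T w \<pi>" "psat T L q \<pi> 0" by auto
    have inT: "\<forall>t. \<pi> t \<in> T"
    proof
      fix t show "\<pi> t \<in> T"
        by (induction t) (use p w in \<open>auto simp: is_path_def children_def\<close>)
    qed
    have "\<forall>t. (h \<circ> \<pi>) (Suc t) \<in> ksucc ((h \<circ> \<pi>) t)"
    proof
      fix t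
      have "\<pi> (Suc t) \<in> children T (\<pi> t)" using p by (simp add: is_path_def)
      then show "(h \<circ> \<pi>) (Suc t) \<in> ksucc ((h \<circ> \<pi>) t)"
        using bij inT by (auto simp: bij_betw_def)
    qed
    moreover have "(h \<circ> \<pi>) 0 = h w" using p by (simp add: is_path_def)
    moreover have "kpsat q (h \<circ> \<pi>) 0" using Ex inT p by blast
    ultimately show "ksat (sform.Ex q) (h w)" unfolding ksat.simps by blast
  next
    fix w assume w: "w \<in> T" and "ksat (sform.Ex q) (h w)"
    then obtain \<rho> where r: "\<rho> 0 = h w" "\<forall>t. \<rho> (Suc t) \<in> ksucc (\<rho> t)" "kpsat q \<rho> 0" by auto
    define \<pi> where "\<pi> = rec_nat w (\<lambda>t v. inv_into (children T v) h (\<rho> (Suc t)))"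
    have p0: "\<pi> 0 = w" by (simp add: \<pi>_def)
    have pS: "\<pi> (Suc t) = inv_into (children T (\<pi> t)) h (\<rho> (Suc t))" for t by (simp add: \<pi>_def)
    have inv: "\<pi> t \<in> T \<and> h (\<pi> t) = \<rho> t" for t
    proof (induction t)
      case 0 then show ?case using p0 w r by simp
    next
      case (Suc t)
      then have b: "bij_betw h (children T (\<pi> t)) (ksucc (\<rho> t))" using bij by metis
      have "\<rho> (Suc t) \<in> h ` children T (\<pi> t)" using b r(2) by (simp add: bij_betw_def)
      then have "\<pi> (Suc t) \<in> children T (\<pi> t) \<and> h (\<pi> (Suc t)) = \<rho> (Suc t)"
        by (simp add: pS inv_into_into f_inv_into_f)
      then show ?case by (simp add: children_def)
    qed
    have "is_path T w \<pi>"
      unfolding is_path_def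
    proof (intro conjI allI)
      show "\<pi> 0 = w" by (rule p0)
      fix t
      have "\<rho> (Suc t) \<in> h ` children T (\<pi> t)" using bij inv r(2) by (metis bij_betw_def)
      then show "\<pi> (Suc t) \<in> children T (\<pi> t)" by (simp add: pS inv_into_into)
    qed
    moreover have "h \<circ> \<pi> = \<rho>" using inv by (auto simp: fun_eq_iff)
    moreover have "\<forall>t. \<pi> t \<in> T" using inv by blast
    ultimately have "is_path T w \<pi> \<and> psat T L q \<pi> 0" using Ex r(3) by blast
    then show "ssat T L (sform.Ex q) w" by auto
  qed
next
  case (Dk j g)
  show ?case
  proof (intro ballI iffI)
    fix w assume w: "w \<in> T" and "ssat T L (Dk j g) w"
    then obtain S where S: "S \<subseteq> children T w" "finite S" "card S = j" "\<forall>v\<in>S. ssat T L g v" by auto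
    have b: "bij_betw h (children T w) (ksucc (h w))" using bij w by blast
    have inj: "inj_on h S" using b S(1) by (meson bij_betw_def inj_on_subset)
    have "h ` S \<subseteq> ksucc (h w)" using b S(1) by (auto simp: bij_betw_def)
    moreover have "card (h ` S) = j" using inj S by (simp add: card_image)
    moreover have "\<forall>v\<in>h ` S. ksat g v" using S Dk by (auto simp: children_def)
    ultimately show "ksat (Dk j g) (h w)" using S(2) by auto
  next
    fix w assume w: "w \<in> T" and "ksat (Dk j g) (h w)"
    then obtain S where S: "S \<subseteq> ksucc (h w)" "finite S" "card S = j" "\<forall>v\<in>S. ksat g v" by auto
    have b: "bij_betw h (children T w) (ksucc (h w))" using bij w by blast
    have bi: "bij_betw (inv_into (children T w) h) (ksucc (h w)) (children T w)"
      using b by (rule bij_betw_inv_into)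
    let ?S = "inv_into (children T w) h ` S"
    have "?S \<subseteq> children T w" using bi S(1) by (auto simp: bij_betw_def)
    moreover have "card ?S = j" using S bi by (metis bij_betw_def card_image inj_on_subset)
    moreover have "finite ?S" using S(2) by simp
    moreover have "\<forall>v\<in>?S. ssat T L g v"
    proof
      fix v assume "v \<in> ?S"
      then obtain u where u: "u \<in> S" "v = inv_into (children T w) h u" by blast
      have "u \<in> h ` children T w" using u S(1) b by (auto simp: bij_betw_def)
      then have "h v = u" "v \<in> children T w" using u by (auto simp: f_inv_into_f inv_into_into)
      then show "ssat T L g v" using Dk S(4) u(1) by (auto simp: children_def)
    qed
    ultimately show "ssat T L (Dk j g) w" by auto
  qed
next
  case (Until q1 q2)
  then show ?case by (auto simp: comp_def) 
qed (auto simp: comp_def)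

definition kd :: "nat \<Rightarrow> nat list \<Rightarrow> kind" where
  "kd N w = (if w = replicate (length w) 0 then (if length w \<le> N + 1 then M (N + 1 - length w) else Minf)
             else if last w = 1 then P else B)"

lemma L1: "replicate i (0::nat) @ [1] @ replicate j 0 \<noteq> replicate k 0"
proof
  assume eq: "replicate i (0::nat) @ [1] @ replicate j 0 = replicate k 0"
  have "(1::nat) \<in> set (replicate i (0::nat) @ [1] @ replicate j 0)" by simp
  then have "(1::nat) \<in> set (replicate k (0::nat))" by (simp only: eq)
  then show False by simp
qed

lemma L2: "replicate (Suc j) (0::nat) = replicate j 0 @ [0]"
  by (simp add: replicate_append_same)

lemma L3: "replicate i (0::nat) = xs @ [d] \<longleftrightarrow> (i > 0 \<and> xs = replicate (i - 1) 0 \<and> d = 0)"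
proof (cases i)
  case 0 then show ?thesis by simp
next
  case (Suc n)
  then have "replicate i (0::nat) = replicate n 0 @ [0]" by (simp only: L2)
  then show ?thesis using Suc by (simp only: append1_eq_conv) auto
qed

lemma L4: "replicate i (0::nat) @ [1] @ replicate j 0 = xs @ [d] \<longleftrightarrow>
   (j = 0 \<and> xs = replicate i 0 \<and> d = 1) \<or> (j > 0 \<and> d = 0 \<and> xs = replicate i 0 @ [1] @ replicate (j - 1) 0)"
proof (cases j)
  case 0 then show ?thesis by auto
next
  case (Suc n)
  then have "replicate i (0::nat) @ [1] @ replicate j 0 = (replicate i 0 @ [1] @ replicate n 0) @ [0]" by (simp only: L2 append_assoc)
  then show ?thesis using Suc by (simp only: append1_eq_conv) auto
qed

lemma kd_main: "kd N (replicate i 0) = (if i \<le> N + 1 then M (N + 1 - i) else Minf)"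
  by (simp add: kd_def)

lemma kd_br: "kd N (replicate i 0 @ [1] @ replicate j 0) = (if j = 0 then P else B)"
proof -
  have "replicate i (0::nat) @ [1] @ replicate j 0 \<noteq> replicate (length (replicate i (0::nat) @ [1] @ replicate j 0)) 0"
    by (rule L1)
  then show ?thesis by (cases j) (auto simp: kd_def L2)
qed

lemma ch_main: "children (Tn N) (replicate i 0) =
   insert (replicate (Suc i) 0) (if i = N + 1 then {} else {replicate i 0 @ [1]})"
proof (rule set_eqI)
  fix v
  show "v \<in> children (Tn N) (replicate i 0) \<longleftrightarrow> v \<in> insert (replicate (Suc i) 0) (if i = N + 1 then {} else {replicate i 0 @ [1]})"
  proof
    assume "v \<in> children (Tn N) (replicate i 0)"
    then obtain d where v: "v \<in> Tn N" "v = replicate i 0 @ [d]" by (auto simp: children_def)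
    from v(1) consider (m) i' where "v = replicate i' 0" | (b) i' j where "i' \<noteq> N + 1" "v = replicate i' 0 @ [1] @ replicate j 0"
      by (auto simp: Tn_def)
    then show "v \<in> insert (replicate (Suc i) 0) (if i = N + 1 then {} else {replicate i 0 @ [1]})"
    proof cases
      case m
      then show ?thesis using v(2) L3[of i' "replicate i 0" d] by (auto simp: L2)
    next
      case b
      then have eq: "replicate i' 0 @ [1] @ replicate j 0 = replicate i 0 @ [d]" using v(2) by metis
      from eq[unfolded L4] show ?thesis using b L1[of i' "j - 1" i] by auto
    qed
  next
    assume "v \<in> insert (replicate (Suc i) 0) (if i = N + 1 then {} else {replicate i 0 @ [1]})"
    then show "v \<in> children (Tn N) (replicate i 0)"
    proof
      assume v: "v = replicate (Suc i) 0"
      have "v = replicate i 0 @ [0]" using v by (simp only: L2)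
      moreover have "v \<in> Tn N" unfolding Tn_def using v by blast
      ultimately show ?thesis unfolding children_def by blast
    next
      assume "v \<in> (if i = N + 1 then {} else {replicate i 0 @ [1]})"
      then have i: "i \<noteq> N + 1" and v: "v = replicate i 0 @ [1]" by (auto split: if_splits)
      have "v = replicate i 0 @ [1] @ replicate 0 0" using v by simp
      then have "v \<in> Tn N" using i unfolding Tn_def by blast
      then show ?thesis using v unfolding children_def by blast
    qed
  qed
qed

lemma ch_br: "i \<noteq> N + 1 \<Longrightarrow> children (Tn N) (replicate i 0 @ [1] @ replicate j 0) =
   {replicate i 0 @ [1] @ replicate (Suc j) 0}"
proof (rule set_eqI)
  fix v assume i: "i \<noteq> N + 1"
  show "v \<in> children (Tn N) (replicate i 0 @ [1] @ replicate j 0) \<longleftrightarrow> v \<in> {replicate i 0 @ [1] @ replicate (Suc j) 0}"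
  proof
    assume "v \<in> children (Tn N) (replicate i 0 @ [1] @ replicate j 0)"
    then obtain d where v: "v \<in> Tn N" "v = (replicate i 0 @ [1] @ replicate j 0) @ [d]" by (auto simp: children_def)
    from v(1) consider (m) i' where "v = replicate i' 0" | (b) i' j' where "i' \<noteq> N + 1" "v = replicate i' 0 @ [1] @ replicate j' 0"
      by (auto simp: Tn_def)
    then show "v \<in> {replicate i 0 @ [1] @ replicate (Suc j) 0}"
    proof cases
      case m
      then show ?thesis using v(2) L3[of i' "replicate i 0 @ [1] @ replicate j 0" d] L1[of i j] by auto
    next
      case b
      then have eq: "replicate i' 0 @ [1] @ replicate j' 0 = (replicate i 0 @ [1] @ replicate j 0) @ [d]" using v(2) by metis
      have e2: "replicate i 0 @ [1] @ replicate (Suc j) (0::nat) = (replicate i 0 @ [1] @ replicate j 0) @ [0]"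
        by (simp only: L2 append_assoc)
      from eq[unfolded L4] have "d = 0" using L1[of i j i'] by auto
      then show ?thesis using v(2) e2 by simp
    qed
  next
    assume "v \<in> {replicate i 0 @ [1] @ replicate (Suc j) 0}"
    then have "v = replicate i 0 @ [1] @ replicate (Suc j) 0" by simp
    then have "v = (replicate i 0 @ [1] @ replicate j 0) @ [0]" by (simp only: L2 append_assoc)
    moreover have "v \<in> Tn N" using \<open>v \<in> _\<close> i unfolding Tn_def by blast
    ultimately show "v \<in> children (Tn N) (replicate i 0 @ [1] @ replicate j 0)" by (auto simp: children_def)
  qed
qed

lemma lab_Tn: "w \<in> Tn N \<Longrightarrow> Ln N w = klab (kd N w)"
proof -
  assume "w \<in> Tn N"
  then consider (m) i where "w = replicate i 0" | (b) i j where "i \<noteq> N + 1" "w = replicate i 0 @ [1] @ replicate j 0"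
    by (auto simp: Tn_def)
  then show ?thesis
  proof cases
    case m
    have "\<not> (\<exists>i'. i' \<noteq> N + 1 \<and> w = replicate i' 0 @ [1])"
    proof
      assume "\<exists>i'. i' \<noteq> N + 1 \<and> w = replicate i' 0 @ [1]"
      then obtain i' where "w = replicate i' 0 @ [1]" by blast
      then have "replicate i' 0 @ [1] @ replicate 0 0 = replicate i (0::nat)" using m by simp
      then show False using L1 by blast
    qed
    then show ?thesis using m by (simp add: Ln_def kd_main)
  next
    case b
    show ?thesis
    proof (cases j)
      case 0
      have kw: "kd N w = P" unfolding b(2) 0 by (simp only: kd_br) simp
      have "w = replicate i 0 @ [1]" using b(2) 0 by simp
      then have "\<exists>i'. i' \<noteq> N + 1 \<and> w = replicate i' 0 @ [1]" using b(1) by blast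
      then show ?thesis using kw by (simp add: Ln_def)
    next
      case (Suc j')
      have "w = (replicate i 0 @ [1] @ replicate j' 0) @ [0]" using b Suc by (simp only: L2 append_assoc)
      then have "\<not> (\<exists>i'. i' \<noteq> N + 1 \<and> w = replicate i' 0 @ [1])" by auto
      moreover have "kd N w = B" unfolding b(2) Suc by (simp only: kd_br) simp
      ultimately show ?thesis by (simp add: Ln_def)
    qed
  qed
qed

lemma bij2: "a \<noteq> b \<Longrightarrow> f a \<noteq> f b \<Longrightarrow> bij_betw f {a, b} {f a, f b}"
  by (auto simp: bij_betw_def)
lemma bij1: "bij_betw f {a} {f a}"
  by (auto simp: bij_betw_def)

lemma L5: "replicate (Suc i) (0::nat) \<noteq> replicate i 0 @ [1]"
  using L1[of i 0 "Suc i"] by simp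

lemma bij_Tn: "w \<in> Tn N \<Longrightarrow> bij_betw (kd N) (children (Tn N) w) (ksucc (kd N w))"
proof -
  assume "w \<in> Tn N"
  then consider (m) i where "w = replicate i 0" | (b) i j where "i \<noteq> N + 1" "w = replicate i 0 @ [1] @ replicate j 0"
    by (auto simp: Tn_def)
  then show ?thesis
  proof cases
    case m
    have k2: "kd N (replicate i 0 @ [1]) = P" using kd_br[of N i 0] by simp
    have kS: "kd N (replicate (Suc i) 0) = (if Suc i \<le> N + 1 then M (N + 1 - Suc i) else Minf)" by (rule kd_main)
    have kw: "kd N w = (if i \<le> N + 1 then M (N + 1 - i) else Minf)" unfolding m by (rule kd_main)
    have ch: "children (Tn N) w = insert (replicate (Suc i) 0) (if i = N + 1 then {} else {replicate i 0 @ [1]})"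
      unfolding m by (rule ch_main)
    consider "i \<le> N" | "i = N + 1" | "i > N + 1" by linarith
    then show ?thesis
    proof cases
      case 1
      have k1: "kd N (replicate (Suc i) 0) = M (N - i)" using 1 kS by simp
      have kw': "ksucc (kd N w) = {M (N - i), P}" using 1 kw by (simp add: Suc_diff_le)
      have ch': "children (Tn N) w = {replicate (Suc i) 0, replicate i 0 @ [1]}" using 1 ch by simp
      have "bij_betw (kd N) {replicate (Suc i) 0, replicate i 0 @ [1]} {kd N (replicate (Suc i) 0), kd N (replicate i 0 @ [1])}"
        by (rule bij2) (use L5 k1 k2 in auto)
      then show ?thesis unfolding ch' kw' k1 k2 .
    next
      case 2
      have k1: "kd N (replicate (Suc i) 0) = Minf" using 2 kS by simp
      have kw': "ksucc (kd N w) = {Minf}" using 2 kw by simp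
      have ch': "children (Tn N) w = {replicate (Suc i) 0}" using 2 ch by simp
      show ?thesis using bij1[of "kd N" "replicate (Suc i) 0"] unfolding ch' kw' k1 .
    next
      case 3
      have k1: "kd N (replicate (Suc i) 0) = Minf" using 3 kS by simp
      have kw': "ksucc (kd N w) = {Minf, P}" using 3 kw by simp
      have ch': "children (Tn N) w = {replicate (Suc i) 0, replicate i 0 @ [1]}" using 3 ch by simp
      have "bij_betw (kd N) {replicate (Suc i) 0, replicate i 0 @ [1]} {kd N (replicate (Suc i) 0), kd N (replicate i 0 @ [1])}"
        by (rule bij2) (use L5 k1 k2 in auto)
      then show ?thesis unfolding ch' kw' k1 k2 .
    qed
  next
    case b
    have k1: "kd N (replicate i 0 @ [1] @ replicate (Suc j) 0) = B" by (simp only: kd_br) simp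
    have kw: "kd N w = (if j = 0 then P else B)" unfolding b(2) by (rule kd_br)
    have kw': "ksucc (kd N w) = {B}" using kw by (cases j) simp_all
    have ch': "children (Tn N) w = {replicate i 0 @ [1] @ replicate (Suc j) 0}" unfolding b(2) using b(1) by (rule ch_br)
    show ?thesis using bij1[of "kd N" "replicate i 0 @ [1] @ replicate (Suc j) 0"] unfolding ch' kw' k1 .
  qed
qed

theorem lemma23:
  fixes n :: nat and \<phi> :: "unit sform"
  assumes "n \<ge> 1" and "wf_s \<phi>" and "ssize \<phi> \<le> n"
  shows "models (Tn n) (Ln n) \<phi> \<longleftrightarrow> models (Tn (n + 1)) (Ln (n + 1)) \<phi>"
proof -
  have t: "ssat (Tn N) (Ln N) \<phi> [] = ksat \<phi> (M (Suc N))" for N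
  proof -
    have r: "[] \<in> Tn N" unfolding Tn_def by (metis (mono_tags, lifting) UnI1 mem_Collect_eq replicate_0)
    have "\<forall>w\<in>Tn N. ssat (Tn N) (Ln N) \<phi> w = ksat \<phi> (kd N w)"
      by (rule transfer(1)) (use lab_Tn bij_Tn in blast)+
    then have "ssat (Tn N) (Ln N) \<phi> [] = ksat \<phi> (kd N [])" using r by blast
    moreover have "kd N [] = M (Suc N)" using kd_main[of N 0] by simp
    ultimately show ?thesis by simp
  qed
  have le: "ssize \<phi> \<le> Suc n" using assms(3) by simp
  have e: "ksat \<phi> (M (Suc n)) = ksat \<phi> (M (Suc (Suc n)))"
    using main(1)[of \<phi>] le by blast
  have "Suc (n + 1) = Suc (Suc n)" by simp
  then show ?thesis unfolding models_def t[of n] t[of "n + 1"] using e by metis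
qed

end
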